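(* Let $s,t,D\ge1$ be integers, let $\mathcal G=\{G_1,\dots,G_t\}$ be an $s$-joined graph family on $n$ vertices, and let $\mathcal H$ be a rooted $[t]$-edge-colored graph with $\Delta^{mon}(\mathcal H)\le D$ and $|V(\mathcal H)|\le n-2sD-3s$. Let $(w,r)\in V(\mathcal H)\times[t]$ with $\deg_{H_r}(w)<D$ and let $\mathcal H+wu$ be the extension of $\mathcal H$ with $w\overset{r}{\sim}u$. If $\phi:\mathcal H\hookrightarrow\mathcal G$ is a $(2s,D)$-good embedding, then there is a $(2s,D)$-good embedding $\phi':\mathcal H+wu\hookrightarrow\mathcal G$ extending $\phi$.
   Context: A graph family $\mathcal G=\{G_1,\dots,G_t\}$ is a collection of $t$ simple graphs on a common finite vertex set $V$, $n=|V|$. For $X\subseteq V\times[t]$, $\Gamma_{\mathcal G}(X)=\bigcup_{(v,i)\in X}\{u\in V:uv\in E(G_i)\}$. The family is $s$-joined if for all $X\subseteq V\times[t]$ and $Y\subseteq V$ with $|X|\ge s$ and $|Y|\ge s$ there exist $(v,i)\in X$ and $y\in Y$ with $vy\in E(G_i)$. A $[t]$-edge-colored graph $\mathcal H$ is a simple graph with each edge colored in $[t]$; $H_i$ is its spanning subgraph of color-$i$ edges, $\deg_{H_i}(h)$ the number of color-$i$ edges at $h$, and $\Delta^{mon}(\mathcal H)=\max_i\max_h\deg_{H_i}(h)$. An embedding $\phi:\mathcal H\hookrightarrow\mathcal G$ is an injective map $V(\mathcal H)\to V$ with $\phi(x)\phi(y)\in E(G_i)$ for every edge $xy$ of color $i$.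 A rooted $[t]$-edge-colored graph is one with a distinguished set of roots such that, after deleting all edges with both ends roots, every connected component is a tree containing exactly one root; for a non-root $h$ the unique path from $h$ to the root set (meeting it only at its last vertex) determines the parent of $h$ (its neighbour on the path) and $c(h)$, the color of the edge from $h$ to its parent. For fixed $D$: $P_\phi(\mathcal H)=\{(\phi(h),c(h)):h\text{ non-root}\}$ and, for $X\subseteq V\times[t]$, $R(X,\phi)=|\Gamma_{\mathcal G}(X)\setminus\phi(V(\mathcal H))|-\sum_{(v,i)\in X}[D-\deg_{H_i}(\phi^{-1}(v))]-|P_\phi(\mathcal H)\cap X|$, with $\deg_{H_i}(\phi^{-1}(v))=0$ if $v\notin\phi(V(\mathcal H))$. The embedding $\phi$ is $(s,D)$-good if $R(X,\phi)\ge0$ for every $X\subseteq V\times[t]$ with $|X|\le s$. For $w\in V(\mathcal H)$ and $r\in[t]$ with $\deg_{H_r}(w)<D$, the extension $\mathcal H+wu$ with $w\overset{r}{\sim}u$ is the rooted graph obtained by adding a new non-root vertex $u$ joined to $w$ by an edge of color $r$ (roots unchanged). An embedding extends $\phi$ if it agrees with $\phi$ on $V(\mathcal H)$. *)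

theory Defs
  imports Main
begin

(* Graph family: colours i in {1..t}; G i x y means xy is an edge of G_i. *)
definition graph_family :: "'a set \<Rightarrow> nat \<Rightarrow> (nat \<Rightarrow> 'a \<Rightarrow> 'a \<Rightarrow> bool) \<Rightarrow> bool" where
  "graph_family V t G \<longleftrightarrow> finite V \<and>
     (\<forall>i\<in>{1..t}. \<forall>x y. G i x y \<longrightarrow> x \<in> V \<and> y \<in> V \<and> x \<noteq> y \<and> G i y x)"

definition Gamma :: "'a set \<Rightarrow> (nat \<Rightarrow> 'a \<Rightarrow> 'a \<Rightarrow> bool) \<Rightarrow> ('a \<times> nat) set \<Rightarrow> 'a set" where
  "Gamma V G X = {u \<in> V. \<exists>(v, i) \<in> X. G i u v}"

definition s_joined :: "'a set \<Rightarrow> nat \<Rightarrow> (nat \<Rightarrow> 'a \<Rightarrow> 'a \<Rightarrow> bool) \<Rightarrow> nat \<Rightarrow> bool" where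
  "s_joined V t G s \<longleftrightarrow>
     (\<forall>X Y. X \<subseteq> V \<times> {1..t} \<and> Y \<subseteq> V \<and> card X \<ge> s \<and> card Y \<ge> s \<longrightarrow>
        (\<exists>(v, i) \<in> X. \<exists>y \<in> Y. G i v y))"

definition colored_graph :: "'b set \<Rightarrow> nat \<Rightarrow> (nat \<Rightarrow> 'b \<Rightarrow> 'b \<Rightarrow> bool) \<Rightarrow> bool" where
  "colored_graph VH t HE \<longleftrightarrow> finite VH \<and>
     (\<forall>i x y. HE i x y \<longrightarrow> i \<in> {1..t} \<and> x \<in> VH \<and> y \<in> VH \<and> x \<noteq> y \<and> HE i y x) \<and>
     (\<forall>i j x y. HE i x y \<and> HE j x y \<longrightarrow> i = j)"

definition hdeg :: "'b set \<Rightarrow> (nat \<Rightarrow> 'b \<Rightarrow> 'b \<Rightarrow> bool) \<Rightarrow> nat \<Rightarrow> 'b \<Rightarrow> nat" where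
  "hdeg VH HE i h = card {y \<in> VH. HE i h y}"

definition max_mono_deg_le :: "'b set \<Rightarrow> nat \<Rightarrow> (nat \<Rightarrow> 'b \<Rightarrow> 'b \<Rightarrow> bool) \<Rightarrow> nat \<Rightarrow> bool" where
  "max_mono_deg_le VH t HE D \<longleftrightarrow> (\<forall>i\<in>{1..t}. \<forall>h\<in>VH. hdeg VH HE i h \<le> D)"

definition adjH :: "(nat \<Rightarrow> 'b \<Rightarrow> 'b \<Rightarrow> bool) \<Rightarrow> 'b \<Rightarrow> 'b \<Rightarrow> bool" where
  "adjH HE x y \<longleftrightarrow> (\<exists>i. HE i x y)"

definition is_walk :: "('b \<Rightarrow> 'b \<Rightarrow> bool) \<Rightarrow> 'b list \<Rightarrow> bool" where
  "is_walk A p \<longleftrightarrow> p \<noteq> [] \<and> (\<forall>k. Suc k < length p \<longrightarrow> A (p ! k) (p ! Suc k))"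

definition adj_noroot :: "(nat \<Rightarrow> 'b \<Rightarrow> 'b \<Rightarrow> bool) \<Rightarrow> 'b set \<Rightarrow> 'b \<Rightarrow> 'b \<Rightarrow> bool" where
  "adj_noroot HE R x y \<longleftrightarrow> adjH HE x y \<and> \<not> (x \<in> R \<and> y \<in> R)"

definition has_cycle :: "('b \<Rightarrow> 'b \<Rightarrow> bool) \<Rightarrow> bool" where
  "has_cycle A \<longleftrightarrow> (\<exists>p. is_walk A p \<and> distinct p \<and> length p \<ge> 3 \<and> A (last p) (hd p))"

(* rooted: after deleting root-root edges, every connected component is a tree
   (no cycles; components are connected by definition) containing exactly one root *)
definition rooted :: "'b set \<Rightarrow> (nat \<Rightarrow> 'b \<Rightarrow> 'b \<Rightarrow> bool) \<Rightarrow> 'b set \<Rightarrow> bool" where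
  "rooted VH HE R \<longleftrightarrow> R \<subseteq> VH \<and> \<not> has_cycle (adj_noroot HE R) \<and>
     (\<forall>v\<in>VH. \<exists>!\<rho>. \<rho> \<in> R \<and> (adj_noroot HE R)\<^sup>*\<^sup>* v \<rho>)"

definition root_path :: "(nat \<Rightarrow> 'b \<Rightarrow> 'b \<Rightarrow> bool) \<Rightarrow> 'b set \<Rightarrow> 'b \<Rightarrow> 'b list \<Rightarrow> bool" where
  "root_path HE R h p \<longleftrightarrow> is_walk (adjH HE) p \<and> distinct p \<and> hd p = h \<and> last p \<in> R \<and>
     (\<forall>x \<in> set (butlast p). x \<notin> R)"

definition parent :: "(nat \<Rightarrow> 'b \<Rightarrow> 'b \<Rightarrow> bool) \<Rightarrow> 'b set \<Rightarrow> 'b \<Rightarrow> 'b" where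
  "parent HE R h = (THE p. root_path HE R h p) ! 1"

definition pcol :: "(nat \<Rightarrow> 'b \<Rightarrow> 'b \<Rightarrow> bool) \<Rightarrow> 'b set \<Rightarrow> 'b \<Rightarrow> nat" where
  "pcol HE R h = (THE i. HE i h (parent HE R h))"

definition embedding :: "'a set \<Rightarrow> (nat \<Rightarrow> 'a \<Rightarrow> 'a \<Rightarrow> bool) \<Rightarrow> 'b set \<Rightarrow> (nat \<Rightarrow> 'b \<Rightarrow> 'b \<Rightarrow> bool)
    \<Rightarrow> ('b \<Rightarrow> 'a) \<Rightarrow> bool" where
  "embedding V G VH HE \<phi> \<longleftrightarrow> inj_on \<phi> VH \<and> \<phi> ` VH \<subseteq> V \<and>
     (\<forall>i x y. HE i x y \<longrightarrow> G i (\<phi> x) (\<phi> y))"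

definition degphi :: "'b set \<Rightarrow> (nat \<Rightarrow> 'b \<Rightarrow> 'b \<Rightarrow> bool) \<Rightarrow> ('b \<Rightarrow> 'a) \<Rightarrow> nat \<Rightarrow> 'a \<Rightarrow> nat" where
  "degphi VH HE \<phi> i v = (if v \<in> \<phi> ` VH then hdeg VH HE i (inv_into VH \<phi> v) else 0)"

definition Pset :: "'b set \<Rightarrow> (nat \<Rightarrow> 'b \<Rightarrow> 'b \<Rightarrow> bool) \<Rightarrow> 'b set \<Rightarrow> ('b \<Rightarrow> 'a) \<Rightarrow> ('a \<times> nat) set" where
  "Pset VH HE R \<phi> = {(\<phi> h, pcol HE R h) | h. h \<in> VH - R}"

definition Rval :: "'a set \<Rightarrow> (nat \<Rightarrow> 'a \<Rightarrow> 'a \<Rightarrow> bool) \<Rightarrow> 'b set \<Rightarrow> (nat \<Rightarrow> 'b \<Rightarrow> 'b \<Rightarrow> bool)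
    \<Rightarrow> 'b set \<Rightarrow> nat \<Rightarrow> ('b \<Rightarrow> 'a) \<Rightarrow> ('a \<times> nat) set \<Rightarrow> int" where
  "Rval V G VH HE R D \<phi> X =
     int (card (Gamma V G X - \<phi> ` VH))
     - (\<Sum>(v, i) \<in> X. int D - int (degphi VH HE \<phi> i v))
     - int (card (Pset VH HE R \<phi> \<inter> X))"

definition good :: "'a set \<Rightarrow> nat \<Rightarrow> (nat \<Rightarrow> 'a \<Rightarrow> 'a \<Rightarrow> bool) \<Rightarrow> 'b set \<Rightarrow> (nat \<Rightarrow> 'b \<Rightarrow> 'b \<Rightarrow> bool)
    \<Rightarrow> 'b set \<Rightarrow> nat \<Rightarrow> nat \<Rightarrow> ('b \<Rightarrow> 'a) \<Rightarrow> bool" where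
  "good V t G VH HE R s D \<phi> \<longleftrightarrow>
     (\<forall>X. X \<subseteq> V \<times> {1..t} \<and> card X \<le> s \<longrightarrow> Rval V G VH HE R D \<phi> X \<ge> 0)"

definition ext_edges :: "(nat \<Rightarrow> 'b \<Rightarrow> 'b \<Rightarrow> bool) \<Rightarrow> 'b \<Rightarrow> nat \<Rightarrow> 'b \<Rightarrow> nat \<Rightarrow> 'b \<Rightarrow> 'b \<Rightarrow> bool" where
  "ext_edges HE w r u = (\<lambda>i x y. HE i x y \<or> (i = r \<and> ((x = w \<and> y = u) \<or> (x = u \<and> y = w))))"

end

theory Submission
  imports Defs
begin


lemma walk_succ: "is_walk A p \<longleftrightarrow> p \<noteq> [] \<and> successively A p"
  by (simp add: is_walk_def successively_conv_nth)

lemma succ_rtranclp: "successively A p \<Longrightarrow> p \<noteq> [] \<Longrightarrow> A\<^sup>*\<^sup>* (hd p) (last p)"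
proof (induction p)
  case Nil then show ?case by simp
next
  case (Cons a p)
  show ?case
  proof (cases "p = []")
    case True then show ?thesis by simp
  next
    case False
    then have "A a (hd p)" "successively A p" using Cons.prems by (auto simp: successively_Cons)
    with Cons.IH False show ?thesis by (simp add: converse_rtranclp_into_rtranclp)
  qed
qed

lemma cyc:
  assumes sym: "\<forall>x y. A x y \<longrightarrow> A y x"
    and sp: "successively A p'" and sq: "successively A q'" and dp: "distinct p'" and dq: "distinct q'"
    and ap: "a \<notin> set p'" and aq: "a \<notin> set q'" and ne: "p' \<noteq> []" "q' \<noteq> []"
    and hp: "A a (hd p')" and hq: "A a (hd q')" and hne: "hd p' \<noteq> hd q'"
    and int: "set p' \<inter> set q' \<noteq> {}"
  shows "has_cycle A"
proof -
  have "\<exists>x\<in>set p'. x \<in> set q'" using int by blast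
  then obtain p1 z p2 where P: "p' = p1 @ z # p2" and zq: "z \<in> set q'" and p1q: "\<forall>y\<in>set p1. y \<notin> set q'"
    using split_list_first_prop[of p' "\<lambda>x. x \<in> set q'"] by blast
  obtain q1 q2 where Q: "q' = q1 @ z # q2" using zq split_list by metis
  define c where "c = (a # p1 @ [z]) @ rev q1"
  have s1: "successively A (p1 @ [z])"
    using sp unfolding P by (auto simp: successively_append_iff)
  have s2: "successively A (z # q2)" and s3: "successively A q1" and j: "q1 = [] \<or> A (last q1) z"
    using sq unfolding Q by (auto simp: successively_append_iff)
  have hp1: "hd (p1 @ [z]) = hd p'" using P by (cases p1) auto
  have "successively A (a # p1 @ [z])" using s1 hp hp1 by (simp add: successively_Cons)
  moreover have "successively A (rev q1)" using s3 sym
    by (auto intro: successively_mono)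
  moreover have "q1 = [] \<or> A z (hd (rev q1))" using j sym by (auto simp: hd_rev)
  ultimately have sc: "successively A c" unfolding c_def
    apply (subst successively_append_iff)
    by (simp del: successively_rev)
  have dc: "distinct c" unfolding c_def using dp dq ap aq p1q P Q by auto
  have lc: "A (last c) (hd c)"
  proof (cases "q1 = []")
    case True
    then have "last c = hd q'" using Q by (simp add: c_def)
    then show ?thesis using hq sym by (simp add: c_def)
  next
    case False
    then have "last c = hd q'" using Q by (simp add: c_def last_rev)
    then show ?thesis using hq sym by (simp add: c_def)
  qed
  have "length c \<ge> 3"
  proof (rule ccontr)
    assume "\<not> 3 \<le> length c"
    then have "p1 = [] \<and> q1 = []" by (cases p1; cases q1; simp add: c_def)
    then show False using hne P Q by simp
  qed
  then show ?thesis unfolding has_cycle_def using sc dc lc walk_succ[of A c]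
    by (auto simp: c_def)
qed

lemma two_paths:
  assumes sym: "\<forall>x y. A x y \<longrightarrow> A y x"
  shows "successively A p \<Longrightarrow> successively A q \<Longrightarrow> distinct p \<Longrightarrow> distinct q \<Longrightarrow> p \<noteq> [] \<Longrightarrow> q \<noteq> []
    \<Longrightarrow> hd p = hd q \<Longrightarrow> last p = last q \<Longrightarrow> p \<noteq> q \<Longrightarrow> has_cycle A"
proof (induction p arbitrary: q)
  case Nil then show ?case by simp
next
  case (Cons a p')
  obtain q' where Q: "q = a # q'" using Cons.prems by (cases q) auto
  show ?case
  proof (cases "p' = []")
    case True
    then have "q' \<noteq> []" using Cons.prems Q by auto
    then show ?thesis using True Cons.prems Q by auto
  next
    case pn: False
    show ?thesis
    proof (cases "q' = []")
      case True
      then show ?thesis using pn Cons.prems Q by auto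
    next
      case qn: False
      have sp: "successively A p'" "A a (hd p')" using Cons.prems(1) pn by (auto simp: successively_Cons)
      have sq: "successively A q'" "A a (hd q')" using Cons.prems(2) qn Q by (auto simp: successively_Cons)
      show ?thesis
      proof (cases "hd p' = hd q'")
        case True
        show ?thesis
          by (rule Cons.IH[of q']) (use Cons.prems Q pn qn sp sq True in auto)
      next
        case False
        have "last p' \<in> set p'" using pn by simp
        moreover have "last q' \<in> set q'" using qn by simp
        moreover have "last p' = last q'" using Cons.prems(8) Q pn qn by simp
        ultimately have "last p' \<in> set p' \<inter> set q'" by simp
        then have "set p' \<inter> set q' \<noteq> {}" by blast
        then show ?thesis
          using cyc[OF sym sp(1) sq(1), of a] sp sq Cons.prems Q pn qn False by auto
      qed
    qed
  qed
qed



lemma rp_exists: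
  assumes "(adjH HE)\<^sup>*\<^sup>* x \<rho>" "\<rho> \<in> R"
  shows "\<exists>p. root_path HE R x p"
  using assms(1)
proof (induction rule: converse_rtranclp_induct)
  case base
  then show ?case using assms(2) by (auto simp: root_path_def is_walk_def intro!: exI[of _ "[\<rho>]"])
next
  case (step x z)
  then obtain pz where pz: "root_path HE R z pz" by blast
  then have pzw: "pz \<noteq> []" "successively (adjH HE) pz" "distinct pz" "hd pz = z" "last pz \<in> R"
    "\<forall>y\<in>set (butlast pz). y \<notin> R"
    by (auto simp: root_path_def walk_succ)
  show ?case
  proof (cases "x \<in> R")
    case True
    then show ?thesis by (auto simp: root_path_def is_walk_def intro!: exI[of _ "[x]"])
  next
    case xR: False
    show ?thesis
    proof (cases "x \<in> set pz")
      case True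
      then obtain ys zs where Pz: "pz = ys @ x # zs" using split_list by metis
      have "root_path HE R x (x # zs)"
        unfolding root_path_def walk_succ
      proof (intro conjI)
        show "successively (adjH HE) (x # zs)" using pzw(2) Pz by (auto simp: successively_append_iff)
        show "distinct (x # zs)" using pzw(3) Pz by auto
        show "last (x # zs) \<in> R" using pzw(5) Pz by auto
        show "\<forall>y\<in>set (butlast (x # zs)). y \<notin> R" using pzw(6) Pz by (auto simp: butlast_append)
      qed auto
      then show ?thesis by blast
    next
      case False
      have "root_path HE R x (x # pz)"
        unfolding root_path_def walk_succ
        using pzw step.hyps(1) False xR by (auto simp: successively_Cons)
      then show ?thesis by blast
    qed
  qed
qed

lemma adjH_sym: "colored_graph VH t HE \<Longrightarrow> adjH HE x y \<Longrightarrow> adjH HE y x"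
  unfolding colored_graph_def adjH_def by blast

lemma adjH_in: "colored_graph VH t HE \<Longrightarrow> adjH HE x y \<Longrightarrow> x \<in> VH \<and> y \<in> VH"
  unfolding colored_graph_def adjH_def by blast

lemma succ_noroot:
  assumes "successively (adjH HE) p" "\<forall>y\<in>set (butlast p). y \<notin> R"
  shows "successively (adj_noroot HE R) p"
  unfolding successively_conv_nth
proof (intro allI impI)
  fix i assume i: "Suc i < length p"
  have il: "i < length (butlast p)" using i by simp
  then have "butlast p ! i \<in> set (butlast p)" by (rule nth_mem)
  moreover have "butlast p ! i = p ! i" using il by (simp add: nth_butlast)
  ultimately have "p ! i \<in> set (butlast p)" by simp
  then show "adj_noroot HE R (p ! i) (p ! Suc i)"
    using assms i unfolding adj_noroot_def successively_conv_nth by blast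
qed

lemma rp_unique:
  assumes cg: "colored_graph VH t HE" and ro: "rooted VH HE R" and h: "h \<in> VH"
  shows "\<exists>!p. root_path HE R h p"
proof -
  have ex1: "\<exists>!\<rho>. \<rho> \<in> R \<and> (adj_noroot HE R)\<^sup>*\<^sup>* h \<rho>" using ro h unfolding rooted_def by simp
  then obtain \<rho> where "\<rho> \<in> R" "(adj_noroot HE R)\<^sup>*\<^sup>* h \<rho>" by (meson ex1E)
  have "(adjH HE)\<^sup>*\<^sup>* h \<rho>" using \<open>(adj_noroot HE R)\<^sup>*\<^sup>* h \<rho>\<close>
    by (induction rule: rtranclp_induct) (auto simp: adj_noroot_def intro: rtranclp.rtrancl_into_rtrancl)
  then obtain p where p: "root_path HE R h p" using rp_exists \<open>\<rho> \<in> R\<close> by metis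
  have nc: "\<not> has_cycle (adj_noroot HE R)" using ro by (simp add: rooted_def)
  have sym: "\<forall>x y. adj_noroot HE R x y \<longrightarrow> adj_noroot HE R y x"
    using adjH_sym[OF cg] by (auto simp: adj_noroot_def)
  have ends: "last q \<in> R \<and> (adj_noroot HE R)\<^sup>*\<^sup>* h (last q) \<and> successively (adj_noroot HE R) q
      \<and> q \<noteq> [] \<and> hd q = h \<and> distinct q" if "root_path HE R h q" for q
  proof -
    from that have w: "is_walk (adjH HE) q" "hd q = h" "last q \<in> R" "\<forall>y\<in>set (butlast q). y \<notin> R" "distinct q"
      by (simp_all add: root_path_def)
    then have q1: "q \<noteq> []" "successively (adjH HE) q" by (simp_all add: walk_succ)
    have s: "successively (adj_noroot HE R) q" using succ_noroot[OF q1(2) w(4)] .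
    have "(adj_noroot HE R)\<^sup>*\<^sup>* (hd q) (last q)" by (rule succ_rtranclp[OF s q1(1)])
    then show ?thesis using w s q1 by simp
  qed
  have "q = p" if q: "root_path HE R h q" for q
  proof (rule ccontr)
    assume ne: "q \<noteq> p"
    note eq = ends[OF q] and ep = ends[OF p]
    have uq: "\<And>a b. a \<in> R \<and> (adj_noroot HE R)\<^sup>*\<^sup>* h a \<Longrightarrow> b \<in> R \<and> (adj_noroot HE R)\<^sup>*\<^sup>* h b \<Longrightarrow> a = b"
      using ex1 by blast
    have "last q = last p" by (rule uq) (use eq ep in simp_all)
    moreover have "hd q = hd p" using eq ep by simp
    ultimately have "has_cycle (adj_noroot HE R)"
      using two_paths[OF sym, of q p] eq ep ne by blast
    then show False using nc by simp
  qed
  then show ?thesis using p by blast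
qed

lemma walk_in:
  assumes cg: "colored_graph VH t HE"
  shows "successively (adjH HE) p \<Longrightarrow> p \<noteq> [] \<Longrightarrow> hd p \<in> VH \<Longrightarrow> set p \<subseteq> VH"
proof (induction p)
  case Nil then show ?case by simp
next
  case (Cons a p)
  then show ?case
    using adjH_in[OF cg] by (cases p) (auto simp: successively_Cons)
qed

lemma rp_in:
  assumes cg: "colored_graph VH t HE" and "root_path HE R h p" "h \<in> VH"
  shows "set p \<subseteq> VH"
  using assms walk_in[OF cg, of p] by (auto simp: root_path_def walk_succ)

lemma parent_in:
  assumes cg: "colored_graph VH t HE" and ro: "rooted VH HE R" and h: "h \<in> VH" "h \<notin> R"
  shows "parent HE R h \<in> VH"
proof -
  obtain p where p: "root_path HE R h p" using rp_unique[OF cg ro h(1)] by blast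
  have T: "(THE p. root_path HE R h p) = p" using rp_unique[OF cg ro h(1)] p by (metis the1_equality)
  have "length p \<ge> 2"
  proof (rule ccontr)
    assume "\<not> 2 \<le> length p"
    moreover have "p \<noteq> []" using p by (simp add: root_path_def is_walk_def)
    ultimately obtain x where "p = [x]" by (cases p) (auto simp: Suc_le_eq)
    then show False using p h by (auto simp: root_path_def)
  qed
  then have "p ! 1 \<in> set p" by simp
  then show ?thesis using rp_in[OF cg p h(1)] T by (auto simp: parent_def)
qed



lemma ext_adj: "adjH (ext_edges HE w r u) x y \<longleftrightarrow> adjH HE x y \<or> (x = w \<and> y = u) \<or> (x = u \<and> y = w)"
  by (auto simp: adjH_def ext_edges_def)

lemma rp_same:
  assumes cg: "colored_graph VH t HE" and ro: "rooted VH HE R" and u: "u \<notin> VH" and w: "w \<in> VH"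
    and h: "h \<in> VH"
  shows "root_path (ext_edges HE w r u) R h p \<longleftrightarrow> root_path HE R h p"
proof
  assume rp: "root_path (ext_edges HE w r u) R h p"
  have RV: "R \<subseteq> VH" using ro by (simp add: rooted_def)
  have sp: "successively (adjH (ext_edges HE w r u)) p" "p \<noteq> []" "distinct p" "hd p = h" "last p \<in> R"
    using rp by (auto simp: root_path_def walk_succ)
  have nu: "\<not> adjH HE x u" "\<not> adjH HE u x" for x using adjH_in[OF cg] u by blast+
  have uw: "u \<noteq> w" using u w by blast
  have "u \<notin> set p"
  proof
    assume "u \<in> set p"
    then obtain ys zs where P: "p = ys @ u # zs" using split_list by metis
    have "ys \<noteq> []" using sp(4) P h u by auto
    moreover have "zs \<noteq> []" using sp(5) P RV u by auto
    moreover have "ys = [] \<or> adjH (ext_edges HE w r u) (last ys) u"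
      and "zs = [] \<or> adjH (ext_edges HE w r u) u (hd zs)"
      using sp(1) unfolding P by (auto simp: successively_append_iff successively_Cons)
    ultimately have "last ys = w" "hd zs = w" using nu uw by (auto simp: ext_adj)
    moreover have "last ys \<in> set ys" "hd zs \<in> set zs" using \<open>ys \<noteq> []\<close> \<open>zs \<noteq> []\<close> by auto
    ultimately show False using sp(3) P by auto
  qed
  then have "successively (adjH HE) p"
    by (intro successively_mono[OF sp(1)]) (auto simp: ext_adj)
  then show "root_path HE R h p" using rp by (auto simp: root_path_def walk_succ)
next
  assume rp: "root_path HE R h p"
  then have "successively (adjH HE) p" by (simp add: root_path_def walk_succ)
  then have "successively (adjH (ext_edges HE w r u)) p"
    by (rule successively_mono) (auto simp: ext_adj)
  then show "root_path (ext_edges HE w r u) R h p" using rp by (auto simp: root_path_def walk_succ)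
qed

lemma pcol_same:
  assumes cg: "colored_graph VH t HE" and ro: "rooted VH HE R" and u: "u \<notin> VH" and w: "w \<in> VH"
    and h: "h \<in> VH" "h \<notin> R"
  shows "pcol (ext_edges HE w r u) R h = pcol HE R h"
proof -
  have "(\<lambda>p. root_path (ext_edges HE w r u) R h p) = (\<lambda>p. root_path HE R h p)"
    using rp_same[OF cg ro u w h(1)] by blast
  then have pe: "parent (ext_edges HE w r u) R h = parent HE R h" by (simp add: parent_def)
  have "parent HE R h \<in> VH" by (rule parent_in[OF cg ro h])
  then have "parent HE R h \<noteq> u" "h \<noteq> u" using u h by auto
  then have "(\<lambda>i. ext_edges HE w r u i h (parent HE R h)) = (\<lambda>i. HE i h (parent HE R h))"
    by (auto simp: ext_edges_def)
  then show ?thesis by (simp add: pcol_def pe)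
qed

lemma pcol_u:
  assumes cg: "colored_graph VH t HE" and ro: "rooted VH HE R" and u: "u \<notin> VH" and w: "w \<in> VH"
  shows "pcol (ext_edges HE w r u) R u = r"
proof -
  let ?E = "ext_edges HE w r u"
  have RV: "R \<subseteq> VH" using ro by (simp add: rooted_def)
  have uR: "u \<notin> R" using RV u by blast
  have uw: "u \<noteq> w" using u w by blast
  have nu: "\<not> adjH HE x u" "\<not> adjH HE u x" for x using adjH_in[OF cg] u by blast+
  have form: "\<exists>p'. p = u # p' \<and> p' \<noteq> [] \<and> hd p' = w \<and> successively (adjH ?E) p' \<and> distinct p'
      \<and> last p' \<in> R \<and> (\<forall>y\<in>set (butlast p'). y \<notin> R)" if rp: "root_path ?E R u p" for p
  proof -
    have sp: "successively (adjH ?E) p" "p \<noteq> []" "distinct p" "hd p = u" "last p \<in> R"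
      "\<forall>y\<in>set (butlast p). y \<notin> R"
      using rp by (auto simp: root_path_def walk_succ)
    obtain p' where P: "p = u # p'" using sp(2,4) by (cases p) auto
    have "p' \<noteq> []" using P sp(5) uR by auto
    moreover have "adjH ?E u (hd p')" using sp(1) P \<open>p' \<noteq> []\<close> by (simp add: successively_Cons)
    then have "hd p' = w" using nu by (auto simp: ext_adj)
    moreover have "butlast p = u # butlast p'" using P \<open>p' \<noteq> []\<close> by simp
    ultimately show ?thesis using sp P by (auto simp: successively_Cons)
  qed
  define p0 where "p0 = (if w \<in> R then [u, w] else u # (THE p. root_path HE R w p))"
  have p01: "p0 ! 1 = w"
  proof (cases "w \<in> R")
    case True then show ?thesis by (simp add: p0_def)
  next
    case False
    obtain pw where pw: "root_path HE R w pw" using rp_unique[OF cg ro w] by blast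
    have "(THE p. root_path HE R w p) = pw" using rp_unique[OF cg ro w] pw by (metis the1_equality)
    then have "p0 = u # pw" using False by (simp add: p0_def)
    moreover have "pw \<noteq> []" "hd pw = w" using pw by (auto simp: root_path_def is_walk_def)
    ultimately show ?thesis by (cases pw) auto
  qed
  have ex: "\<exists>!p. root_path ?E R u p"
  proof (cases "w \<in> R")
    case True
    have "root_path ?E R u [u, w]" using True uw uR by (auto simp: root_path_def is_walk_def ext_adj)
    moreover have "p = [u, w]" if rpp: "root_path ?E R u p" for p
    proof -
      obtain p' where P: "p = u # p'" "p' \<noteq> []" "hd p' = w" "\<forall>y\<in>set (butlast p'). y \<notin> R"
        using form[OF rpp] by blast
      have "p' = [w]"
      proof (cases p')
        case Nil then show ?thesis using P by simp
      next
        case (Cons a rest)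
        then show ?thesis using P True by (cases rest) auto
      qed
      then show ?thesis using P by simp
    qed
    ultimately show ?thesis by blast
  next
    case False
    obtain pw where pw: "root_path HE R w pw" using rp_unique[OF cg ro w] by blast
    have pwE: "root_path ?E R w pw" using pw rp_same[OF cg ro u w w] by simp
    have "set pw \<subseteq> VH" by (rule rp_in[OF cg pw w])
    then have upw: "u \<notin> set pw" using u by blast
    have pwp: "pw \<noteq> []" "hd pw = w" using pw by (auto simp: root_path_def is_walk_def)
    have "root_path ?E R u (u # pw)"
      using pwE upw uR pwp unfolding root_path_def walk_succ
      by (auto simp: successively_Cons ext_adj)
    moreover have "p = u # pw" if rpp: "root_path ?E R u p" for p
    proof -
      obtain p' where P: "p = u # p'" "p' \<noteq> []" "hd p' = w" "successively (adjH ?E) p'" "distinct p'"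
        "last p' \<in> R" "\<forall>y\<in>set (butlast p'). y \<notin> R"
        using form[OF rpp] by blast
      have "root_path ?E R w p'" using P by (auto simp: root_path_def walk_succ)
      then have "root_path HE R w p'" using rp_same[OF cg ro u w w] by simp
      then have "p' = pw" using pw rp_unique[OF cg ro w] by blast
      then show ?thesis using P by simp
    qed
    ultimately show ?thesis by blast
  qed
  have "root_path ?E R u p0"
  proof (cases "w \<in> R")
    case True
    then show ?thesis using uw uR by (auto simp: p0_def root_path_def is_walk_def ext_adj)
  next
    case False
    obtain pw where pw: "root_path HE R w pw" using rp_unique[OF cg ro w] by blast
    have T: "(THE p. root_path HE R w p) = pw" using rp_unique[OF cg ro w] pw by (metis the1_equality)
    have pwE: "root_path ?E R w pw" using pw rp_same[OF cg ro u w w] by simp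
    have "set pw \<subseteq> VH" by (rule rp_in[OF cg pw w])
    then have upw: "u \<notin> set pw" using u by blast
    have pwp: "pw \<noteq> []" "hd pw = w" using pw by (auto simp: root_path_def is_walk_def)
    show ?thesis unfolding p0_def T using False
      using pwE upw uR pwp unfolding root_path_def walk_succ
      by (auto simp: successively_Cons ext_adj)
  qed
  then have "(THE p. root_path ?E R u p) = p0" using ex by (metis the1_equality)
  then have par: "parent ?E R u = w" using p01 by (simp add: parent_def)
  have "(\<lambda>i. ?E i u w) = (\<lambda>i. i = r)"
    using u cg by (auto simp: ext_edges_def colored_graph_def)
  then show ?thesis by (simp add: pcol_def par)
qed



lemma Gamma_sub: "Gamma V G X \<subseteq> V" by (auto simp: Gamma_def)
lemma Gamma_Un: "Gamma V G (X \<union> Y) = Gamma V G X \<union> Gamma V G Y" by (auto simp: Gamma_def)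
lemma Gamma_mono: "X \<subseteq> Y \<Longrightarrow> Gamma V G X \<subseteq> Gamma V G Y" by (auto simp: Gamma_def)
lemma Gamma_empty: "Gamma V G {} = {}" by (auto simp: Gamma_def)

lemma Pset_eq: "Pset VH HE R \<phi> = (\<lambda>h. (\<phi> h, pcol HE R h)) ` (VH - R)"
  by (auto simp: Pset_def)

lemma Rval_empty: "Rval V G VH HE R D \<phi> {} = 0"
  by (simp add: Rval_def Gamma_empty)

lemma submod:
  assumes fV: "finite V" and fVH: "finite VH" and fX: "finite X" and fY: "finite Y"
  shows "Rval V G VH HE R D \<phi> (X \<union> Y) + Rval V G VH HE R D \<phi> (X \<inter> Y)
       \<le> Rval V G VH HE R D \<phi> X + Rval V G VH HE R D \<phi> Y"
proof -
  let ?T = "\<phi> ` VH"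
  let ?A = "Gamma V G X - ?T" and ?B = "Gamma V G Y - ?T"
  have fA: "finite ?A" "finite ?B" using fV Gamma_sub by (metis finite_Diff finite_subset)+
  have e1: "Gamma V G (X \<union> Y) - ?T = ?A \<union> ?B" by (auto simp: Gamma_Un)
  have e2: "Gamma V G (X \<inter> Y) - ?T \<subseteq> ?A \<inter> ?B" using Gamma_mono[of "X \<inter> Y" X V G] Gamma_mono[of "X \<inter> Y" Y V G] by auto
  have c1: "card (Gamma V G (X \<union> Y) - ?T) + card (Gamma V G (X \<inter> Y) - ?T) \<le> card ?A + card ?B"
    using card_Un_Int[OF fA] card_mono[OF _ e2] fA e1 by simp
  let ?g = "\<lambda>(v, i). int D - int (degphi VH HE \<phi> i v)"
  have s1: "sum ?g (X \<union> Y) + sum ?g (X \<inter> Y) = sum ?g X + sum ?g Y"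
    using sum.union_inter[OF fX fY] by simp
  let ?P = "Pset VH HE R \<phi>"
  have fP: "finite (?P \<inter> X)" "finite (?P \<inter> Y)" using fX fY by auto
  have c2: "card (?P \<inter> (X \<union> Y)) + card (?P \<inter> (X \<inter> Y)) = card (?P \<inter> X) + card (?P \<inter> Y)"
  proof -
    have "?P \<inter> (X \<union> Y) = (?P \<inter> X) \<union> (?P \<inter> Y)" "?P \<inter> (X \<inter> Y) = (?P \<inter> X) \<inter> (?P \<inter> Y)" by auto
    then show ?thesis using card_Un_Int[OF fP] by simp
  qed
  show ?thesis unfolding Rval_def using c1 s1 c2 by linarith
qed

lemma big:
  assumes gf: "graph_family V t G" and cV: "card V = n" and sj: "s_joined V t G s"
    and fVH: "finite VH"
    and hyp: "int (card VH) \<le> int n - 2 * int s * int D - 3 * int s"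
    and X: "X \<subseteq> V \<times> {1..t}" "s \<le> card X" "card X \<le> 2 * s" and s1: "s \<ge> 1"
  shows "Rval V G VH HE R D \<phi> X \<ge> 1"
proof -
  have fV: "finite V" using gf by (simp add: graph_family_def)
  have fX: "finite X" using X s1 by (cases "finite X") auto
  let ?\<Gamma> = "Gamma V G X"
  have "card (V - ?\<Gamma>) < s"
  proof (rule ccontr)
    assume "\<not> card (V - ?\<Gamma>) < s"
    then have pre: "X \<subseteq> V \<times> {1..t} \<and> V - ?\<Gamma> \<subseteq> V \<and> card X \<ge> s \<and> card (V - ?\<Gamma>) \<ge> s"
      using X by auto
    have "\<exists>(v, i) \<in> X. \<exists>y \<in> V - ?\<Gamma>. G i v y"
      using sj[unfolded s_joined_def, rule_format, OF pre] .
    then obtain v i y where vi: "(v, i) \<in> X" "y \<in> V" "y \<notin> ?\<Gamma>" "G i v y" by blast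
    have "i \<in> {1..t}" using vi X by auto
    then have "G i y v" using gf vi unfolding graph_family_def by blast
    then have "y \<in> ?\<Gamma>" using vi unfolding Gamma_def by blast
    then show False using vi by simp
  qed
  moreover have "card V = card ?\<Gamma> + card (V - ?\<Gamma>)"
  proof -
    have f: "finite ?\<Gamma>" using Gamma_sub[of V G X] fV by (rule finite_subset)
    have "card (V - ?\<Gamma>) = card V - card ?\<Gamma>" by (rule card_Diff_subset[OF f Gamma_sub])
    moreover have "card ?\<Gamma> \<le> card V" by (rule card_mono[OF fV Gamma_sub])
    ultimately show ?thesis by simp
  qed
  ultimately have g1: "int (card ?\<Gamma>) \<ge> int n - int s + 1" using cV by linarith
  have "card ?\<Gamma> - card (\<phi> ` VH) \<le> card (?\<Gamma> - \<phi> ` VH)"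
    using fVH by (simp add: diff_card_le_card_Diff)
  moreover have "card (\<phi> ` VH) \<le> card VH" using fVH by (rule card_image_le)
  ultimately have g2: "int (card (?\<Gamma> - \<phi> ` VH)) \<ge> int n - int s + 1 - int (card VH)" using g1 by linarith
  have "(\<Sum>(v, i) \<in> X. int D - int (degphi VH HE \<phi> i v)) \<le> (\<Sum>(v, i) \<in> X. int D)"
    by (rule sum_mono) auto
  also have "\<dots> = int (card X) * int D" by (simp add: case_prod_beta)
  also have "\<dots> \<le> int (2 * s) * int D" using X by (intro mult_right_mono) auto
  finally have g3: "(\<Sum>(v, i) \<in> X. int D - int (degphi VH HE \<phi> i v)) \<le> 2 * int s * int D" by simp
  have "card (Pset VH HE R \<phi> \<inter> X) \<le> card X" using fX by (simp add: card_mono)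
  then have g4: "int (card (Pset VH HE R \<phi> \<inter> X)) \<le> 2 * int s" using X by linarith
  show ?thesis unfolding Rval_def using g2 g3 g4 hyp by linarith
qed

lemma deg_old:
  assumes cg: "colored_graph VH t HE" and u: "u \<notin> VH" and h: "h \<in> VH"
  shows "hdeg (insert u VH) (ext_edges HE w r u) i h = hdeg VH HE i h + (if h = w \<and> i = r then 1 else 0)"
proof -
  have fVH: "finite VH" using cg by (simp add: colored_graph_def)
  have hu: "h \<noteq> u" using h u by blast
  have in1: "HE i h z \<Longrightarrow> z \<in> VH" for z using cg by (auto simp: colored_graph_def)
  have eq: "{z \<in> insert u VH. ext_edges HE w r u i h z} = {z \<in> VH. HE i h z} \<union> (if h = w \<and> i = r then {u} else {})"
    using hu in1 by (auto simp: ext_edges_def)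
  have f: "finite {z \<in> VH. HE i h z}" using fVH by simp
  have "u \<notin> {z \<in> VH. HE i h z}" using u by simp
  then show ?thesis unfolding hdeg_def eq using f by auto
qed

lemma deg_u:
  assumes cg: "colored_graph VH t HE" and u: "u \<notin> VH" and w: "w \<in> VH"
  shows "hdeg (insert u VH) (ext_edges HE w r u) i u = (if i = r then 1 else 0)"
proof -
  have uw: "u \<noteq> w" using u w by blast
  have in1: "\<not> HE i u z" for z using cg u by (auto simp: colored_graph_def)
  have eq: "{z \<in> insert u VH. ext_edges HE w r u i u z} = (if i = r then {w} else {})"
    using uw in1 w by (auto simp: ext_edges_def)
  show ?thesis unfolding hdeg_def eq by simp
qed

lemma degphi_ext:
  assumes cg: "colored_graph VH t HE" and u: "u \<notin> VH" and w: "w \<in> VH"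
    and inj: "inj_on \<phi> VH" and y: "y \<notin> \<phi> ` VH"
  shows "degphi (insert u VH) (ext_edges HE w r u) (\<phi>(u := y)) i v
     = degphi VH HE \<phi> i v + (if v = \<phi> w \<and> i = r then 1 else 0) + (if v = y \<and> i = r then 1 else 0)"
proof -
  let ?\<psi> = "\<phi>(u := y)"
  have im: "?\<psi> ` VH = \<phi> ` VH" by (rule image_cong) (use u in auto)
  have im2: "?\<psi> ` insert u VH = insert y (\<phi> ` VH)" by (simp only: image_insert im) simp
  have inj2: "inj_on ?\<psi> (insert u VH)"
  proof -
    have "inj_on ?\<psi> VH" using inj u by (auto simp: inj_on_def)
    then show ?thesis using y im u by (simp add: inj_on_insert)
  qed
  have yw: "y \<noteq> \<phi> w" using y w by blast
  show ?thesis
  proof (cases "v = y")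
    case True
    have "inv_into (insert u VH) ?\<psi> y = u"
      using inv_into_f_f[OF inj2, of u] by simp
    then show ?thesis using True y yw deg_u[OF cg u w] by (simp add: degphi_def im2)
  next
    case vy: False
    show ?thesis
    proof (cases "v \<in> \<phi> ` VH")
      case True
      then obtain h where hh: "h \<in> VH" "v = \<phi> h" by blast
      have "?\<psi> h = v" using hh u by auto
      then have i1: "inv_into (insert u VH) ?\<psi> v = h" using inv_into_f_f[OF inj2, of h] hh by simp
      have i2: "inv_into VH \<phi> v = h" using inv_into_f_f[OF inj hh(1)] hh by simp
      have "(v = \<phi> w) = (h = w)" using hh inj w by (auto simp: inj_on_def)
      moreover have "degphi (insert u VH) (ext_edges HE w r u) ?\<psi> i v = hdeg (insert u VH) (ext_edges HE w r u) i h"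
        unfolding degphi_def im2 using True i1 by simp
      moreover have "degphi VH HE \<phi> i v = hdeg VH HE i h" unfolding degphi_def using True i2 by simp
      ultimately show ?thesis using vy deg_old[OF cg u hh(1), of w r i] by simp
    next
      case False
      then show ?thesis using vy w by (auto simp: degphi_def im2)
    qed
  qed
qed

lemma Pset_ext:
  assumes cg: "colored_graph VH t HE" and ro: "rooted VH HE R" and u: "u \<notin> VH" and w: "w \<in> VH"
  shows "Pset (insert u VH) (ext_edges HE w r u) R (\<phi>(u := y)) = insert (y, r) (Pset VH HE R \<phi>)"
proof -
  have uR: "u \<notin> R" using ro u by (auto simp: rooted_def)
  have "insert u VH - R = insert u (VH - R)" using uR by auto
  then have "Pset (insert u VH) (ext_edges HE w r u) R (\<phi>(u := y))
      = insert (y, pcol (ext_edges HE w r u) R u) ((\<lambda>h. ((\<phi>(u := y)) h, pcol (ext_edges HE w r u) R h)) ` (VH - R))"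
    by (simp add: Pset_eq)
  also have "(\<lambda>h. ((\<phi>(u := y)) h, pcol (ext_edges HE w r u) R h)) ` (VH - R) = (\<lambda>h. (\<phi> h, pcol HE R h)) ` (VH - R)"
    using pcol_same[OF cg ro u w] u by (intro image_cong) auto
  finally show ?thesis using pcol_u[OF cg ro u w] by (simp add: Pset_eq)
qed

lemma rval_ext:
  assumes fV: "finite V" and cg: "colored_graph VH t HE" and ro: "rooted VH HE R"
    and u: "u \<notin> VH" and w: "w \<in> VH"
    and inj: "inj_on \<phi> VH" and y: "y \<notin> \<phi> ` VH" and fX: "finite X"
  shows "Rval V G (insert u VH) (ext_edges HE w r u) R D (\<phi>(u := y)) X
     = Rval V G VH HE R D \<phi> X - (if y \<in> Gamma V G X then 1 else 0) + (if (\<phi> w, r) \<in> X then 1 else 0)"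
proof -
  let ?\<psi> = "\<phi>(u := y)"
  let ?T = "\<phi> ` VH"
  have im: "?\<psi> ` VH = \<phi> ` VH" by (rule image_cong) (use u in auto)
  have im2: "?\<psi> ` insert u VH = insert y (\<phi> ` VH)" by (simp only: image_insert im) simp
  let ?A = "Gamma V G X - ?T"
  have fA: "finite ?A" using fV Gamma_sub[of V G X] by (metis finite_Diff finite_subset)
  have eA: "Gamma V G X - ?\<psi> ` insert u VH = ?A - {y}" unfolding im2 by auto
  have c1: "int (card (Gamma V G X - ?\<psi> ` insert u VH)) = int (card ?A) - (if y \<in> Gamma V G X then 1 else 0)"
  proof (cases "y \<in> Gamma V G X")
    case True
    then have yA: "y \<in> ?A" using y by simp
    then have "card ?A > 0" using fA card_gt_0_iff by blast
    then show ?thesis unfolding eA using yA True by (simp add: card_Diff_singleton of_nat_diff)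
  next
    case False
    then show ?thesis unfolding eA by simp
  qed
  let ?g = "\<lambda>(v, i). int D - int (degphi VH HE \<phi> i v)"
  let ?g' = "\<lambda>(v, i). int D - int (degphi (insert u VH) (ext_edges HE w r u) ?\<psi> i v)"
  let ?d1 = "\<lambda>x. if x = (\<phi> w, r) then 1 else (0::int)"
  let ?d2 = "\<lambda>x. if x = (y, r) then 1 else (0::int)"
  have "sum ?g' X = sum (\<lambda>x. ?g x - ?d1 x - ?d2 x) X"
    by (rule sum.cong) (auto simp: degphi_ext[OF cg u w inj y] split: if_splits)
  also have "\<dots> = sum ?g X - sum ?d1 X - sum ?d2 X" by (simp add: sum_subtractf)
  also have "\<dots> = sum ?g X - (if (\<phi> w, r) \<in> X then 1 else 0) - (if (y, r) \<in> X then 1 else 0)"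
    using fX by (simp add: sum.delta)
  finally have c2: "sum ?g' X = sum ?g X - (if (\<phi> w, r) \<in> X then 1 else 0) - (if (y, r) \<in> X then 1 else 0)" .
  let ?P = "Pset VH HE R \<phi>"
  have yP: "(y, r) \<notin> ?P" using y by (auto simp: Pset_eq)
  have fP: "finite (?P \<inter> X)" using fX by simp
  have c3: "int (card (insert (y, r) ?P \<inter> X)) = int (card (?P \<inter> X)) + (if (y, r) \<in> X then 1 else 0)"
  proof (cases "(y, r) \<in> X")
    case True
    then have "insert (y, r) ?P \<inter> X = insert (y, r) (?P \<inter> X)" by auto
    then show ?thesis using True yP fP by simp
  next
    case False
    then have "insert (y, r) ?P \<inter> X = ?P \<inter> X" by auto
    then show ?thesis using False by simp
  qed
  show ?thesis unfolding Rval_def Pset_ext[OF cg ro u w] using c1 c2 c3 by simp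
qed



theorem lemma2p8:
  fixes V :: "'a set" and G :: "nat \<Rightarrow> 'a \<Rightarrow> 'a \<Rightarrow> bool"
    and VH :: "'b set" and HE :: "nat \<Rightarrow> 'b \<Rightarrow> 'b \<Rightarrow> bool" and R :: "'b set"
    and s t D n r :: nat and w u :: 'b and \<phi> :: "'b \<Rightarrow> 'a"
  assumes "s \<ge> 1" and "t \<ge> 1" and "D \<ge> 1"
    and "graph_family V t G" and "card V = n" and "s_joined V t G s"
    and "colored_graph VH t HE" and "rooted VH HE R"
    and "max_mono_deg_le VH t HE D"
    and "int (card VH) \<le> int n - 2 * int s * int D - 3 * int s"
    and "w \<in> VH" and "r \<in> {1..t}" and "hdeg VH HE r w < D"
    and "u \<notin> VH"
    and "embedding V G VH HE \<phi>" and "good V t G VH HE R (2 * s) D \<phi>"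
  shows "\<exists>\<phi>'. embedding V G (insert u VH) (ext_edges HE w r u) \<phi>' \<and>
              (\<forall>x\<in>VH. \<phi>' x = \<phi> x) \<and>
              good V t G (insert u VH) (ext_edges HE w r u) R (2 * s) D \<phi>'"
proof -
  note s1 = assms(1) and gf = assms(4) and cV = assms(5) and sj = assms(6) and cg = assms(7)
    and ro = assms(8) and hyp = assms(10) and w = assms(11) and r = assms(12) and dw = assms(13)
    and u = assms(14) and emb = assms(15) and gd = assms(16)
  have fV: "finite V" using gf by (simp add: graph_family_def)
  have fVH: "finite VH" using cg by (simp add: colored_graph_def)
  have inj: "inj_on \<phi> VH" and imV: "\<phi> ` VH \<subseteq> V" and edg: "\<And>i x y. HE i x y \<Longrightarrow> G i (\<phi> x) (\<phi> y)"
    using emb by (auto simp: embedding_def)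
  let ?Rv = "Rval V G VH HE R D \<phi>"
  let ?T = "\<phi> ` VH"
  let ?X0 = "(\<phi> w, r)"
  have fS: "finite (V \<times> {1..t})" using fV by simp
  have nonneg: "?Rv X \<ge> 0" if "X \<subseteq> V \<times> {1..t}" "card X \<le> 2 * s" for X
    using gd that by (simp add: good_def)
  define crit where "crit X \<longleftrightarrow> X \<subseteq> V \<times> {1..t} \<and> card X \<le> 2 * s \<and> ?Rv X = 0 \<and> ?X0 \<notin> X" for X
  have critsmall: "card X < s" if "crit X" for X
  proof (rule ccontr)
    assume "\<not> card X < s"
    then have "?Rv X \<ge> 1" by (intro big[OF gf cV sj fVH hyp]) (use that s1 in \<open>auto simp: crit_def\<close>)
    then show False using that by (simp add: crit_def)
  qed
  have critfin: "finite X" if "crit X" for X using that fS by (auto simp: crit_def intro: finite_subset)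
  have "{X. crit X} \<subseteq> Pow (V \<times> {1..t})" by (auto simp: crit_def)
  moreover have "finite (Pow (V \<times> {1..t}))" using fS by simp
  ultimately have fC: "finite {X. crit X}" by (rule finite_subset)
  have c0: "crit {}" by (simp add: crit_def Rval_empty)
  let ?m = "Max (card ` {X. crit X})"
  have "?m \<in> card ` {X. crit X}" using fC c0 by (intro Max_in) auto
  then obtain U where U: "crit U" "card U = ?m" by auto
  have Umax: "card X \<le> card U" if "crit X" for X using fC that U by (auto intro: Max_ge)
  have sub: "X \<subseteq> U" if X: "crit X" for X
  proof -
    have fX: "finite X" "finite U" using critfin X U by auto
    have "card (X \<union> U) \<le> card X + card U" by (rule card_Un_le)
    then have cu: "card (X \<union> U) \<le> 2 * s" using critsmall[OF X] critsmall[OF U(1)] by linarith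
    have ci: "card (X \<inter> U) \<le> 2 * s" using card_mono[OF fX(1), of "X \<inter> U"] critsmall[OF X] by auto
    have XU: "X \<union> U \<subseteq> V \<times> {1..t}" "X \<inter> U \<subseteq> V \<times> {1..t}" using X U by (auto simp: crit_def)
    have "?Rv (X \<union> U) + ?Rv (X \<inter> U) \<le> ?Rv X + ?Rv U" by (rule submod[OF fV fVH fX])
    moreover have "?Rv X = 0" "?Rv U = 0" using X U by (auto simp: crit_def)
    moreover have "?Rv (X \<union> U) \<ge> 0" "?Rv (X \<inter> U) \<ge> 0" using nonneg XU cu ci by auto
    ultimately have "?Rv (X \<union> U) = 0" by linarith
    then have "crit (X \<union> U)" using XU cu X U by (auto simp: crit_def)
    then have "card (X \<union> U) \<le> card U" by (rule Umax)
    then have "X \<union> U = U" using fX by (metis Un_upper2 card_subset_eq finite_Un le_antisym card_mono)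
    then show ?thesis by blast
  qed
  have fU: "finite U" using critfin U by auto
  have X0U: "?X0 \<notin> U" using U by (simp add: crit_def)
  have X0S: "?X0 \<in> V \<times> {1..t}" using imV w r by auto
  let ?U' = "insert ?X0 U"
  have "card ?U' \<le> 2 * s" using critsmall[OF U(1)] fU X0U by simp
  moreover have "?U' \<subseteq> V \<times> {1..t}" using X0S U by (auto simp: crit_def)
  ultimately have RU': "?Rv ?U' \<ge> 0" using nonneg by blast
  have dg: "degphi VH HE \<phi> r (\<phi> w) = hdeg VH HE r w"
    using inv_into_f_f[OF inj w] w by (simp add: degphi_def)
  let ?g = "\<lambda>(v, i). int D - int (degphi VH HE \<phi> i v)"
  have sU': "sum ?g ?U' = (int D - int (hdeg VH HE r w)) + sum ?g U"
    using fU X0U dg by simp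
  have "card (Pset VH HE R \<phi> \<inter> U) \<le> card (Pset VH HE R \<phi> \<inter> ?U')"
    using fU by (intro card_mono) auto
  then have cmp: "int (card (Gamma V G ?U' - ?T)) > int (card (Gamma V G U - ?T))"
    using RU' U(1) sU' dw unfolding crit_def Rval_def by linarith
  have "\<not> (Gamma V G ?U' - ?T \<subseteq> Gamma V G U - ?T)"
  proof
    assume "Gamma V G ?U' - ?T \<subseteq> Gamma V G U - ?T"
    moreover have "finite (Gamma V G U - ?T)" using fV Gamma_sub[of V G U] by (metis finite_Diff finite_subset)
    ultimately have "card (Gamma V G ?U' - ?T) \<le> card (Gamma V G U - ?T)" by (rule card_mono[rotated])
    then show False using cmp by linarith
  qed
  then obtain y where y1: "y \<in> Gamma V G ?U'" and yT: "y \<notin> ?T" and yU: "y \<notin> Gamma V G U" by blast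
  have "Gamma V G ?U' = Gamma V G {?X0} \<union> Gamma V G U" using Gamma_Un[of V G "{?X0}" U] by simp
  then have "y \<in> Gamma V G {?X0}" using y1 yU by blast
  then have yV: "y \<in> V" and yG: "G r y (\<phi> w)" by (auto simp: Gamma_def)
  have yG2: "G r (\<phi> w) y" using gf r yG by (auto simp: graph_family_def)
  let ?\<psi> = "\<phi>(u := y)"
  have agree: "\<forall>x\<in>VH. ?\<psi> x = \<phi> x" using u by auto
  have im: "?\<psi> ` VH = \<phi> ` VH" by (rule image_cong) (use u in auto)
  have im2: "?\<psi> ` insert u VH = insert y (\<phi> ` VH)" by (simp only: image_insert im) simp
  have embn: "embedding V G (insert u VH) (ext_edges HE w r u) ?\<psi>"
    unfolding embedding_def
  proof (intro conjI allI impI)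
    have "inj_on ?\<psi> VH" using inj u by (auto simp: inj_on_def)
    then show "inj_on ?\<psi> (insert u VH)" using yT im u by (simp add: inj_on_insert)
    show "?\<psi> ` insert u VH \<subseteq> V" unfolding im2 using yV imV by auto
  next
    fix i x z assume e: "ext_edges HE w r u i x z"
    have inV: "HE i x z \<Longrightarrow> x \<in> VH \<and> z \<in> VH" using cg by (auto simp: colored_graph_def)
    have wu: "w \<noteq> u" using w u by blast
    show "G i (?\<psi> x) (?\<psi> z)"
      using e inV edg u wu yG yG2 by (auto simp: ext_edges_def)
  qed
  have goodn: "good V t G (insert u VH) (ext_edges HE w r u) R (2 * s) D ?\<psi>"
    unfolding good_def
  proof (intro allI impI)
    fix X assume X: "X \<subseteq> V \<times> {1..t} \<and> card X \<le> 2 * s"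
    have fX: "finite X" using X fS by (auto intro: finite_subset)
    have eq: "Rval V G (insert u VH) (ext_edges HE w r u) R D ?\<psi> X
      = ?Rv X - (if y \<in> Gamma V G X then 1 else 0) + (if ?X0 \<in> X then 1 else 0)"
      by (rule rval_ext[OF fV cg ro u w inj yT fX])
    have n0: "?Rv X \<ge> 0" using nonneg X by blast
    show "Rval V G (insert u VH) (ext_edges HE w r u) R D ?\<psi> X \<ge> 0"
    proof (cases "?X0 \<in> X \<or> y \<notin> Gamma V G X")
      case True
      then show ?thesis using eq n0 by auto
    next
      case False
      have "?Rv X \<noteq> 0"
      proof
        assume "?Rv X = 0"
        then have "crit X" using X False by (simp add: crit_def)
        then have "X \<subseteq> U" by (rule sub)
        then have "Gamma V G X \<subseteq> Gamma V G U" by (rule Gamma_mono)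
        then show False using False yU by blast
      qed
      then show ?thesis using eq n0 by auto
    qed
  qed
  show ?thesis using embn agree goodn by blast
qed

end
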